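(* Let $p,q\in\{y=0\}\subset\mathbb R^2$, $p\ne q$, $L=|p-q|$. For $\epsilon\in(0,1]$ let $\Upsilon_\epsilon\in H^2([0,L];\mathbb R^2)$ be a curve with constant speed $|\partial_x\Upsilon_\epsilon|\equiv\ell(\Upsilon_\epsilon)/L$, $\Upsilon_\epsilon(0)=p$, $\Upsilon_\epsilon(L)=q$, horizontal tangent at $x=0$ and $x=L$, and suppose there is $C>0$ with $$\ell(\Upsilon_\epsilon)-|p-q|\le C\epsilon^{1/2},\qquad \epsilon^{1/2}\int_0^{\ell(\Upsilon_\epsilon)}\kappa_{\gamma_\epsilon}^2\,ds\le C$$ for all $\epsilon$, where $\gamma_\epsilon$ is the arclength reparametrization of $\Upsilon_\epsilon$ and $\kappa_{\gamma_\epsilon}$ its curvature. Then, up to a subsequence, there exists $\Upsilon\in W^{1,\infty}([0,L];\mathbb R^2)$ such that $\Upsilon_\epsilon\to\Upsilon$ in $H^1([0,L];\mathbb R^2)$ and weakly-* in $W^{1,\infty}([0,L];\mathbb R^2)$. Moreover there exists a constant $C'>0$ such that $\|\partial_x\Upsilon_\epsilon-\partial_x\Upsilon\|_{L^2}^2\le C'\epsilon^{1/2}$.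
   Context: $\ell(\Upsilon)=\int_0^L|\partial_x\Upsilon|\,dx$ is the length. *)

theory Defs
  imports "HOL-Analysis.Analysis"
begin

text \<open>f belongs to H^2([a,b]) with classical first derivative f' (f is C^1)
  and weak second derivative f'' in L^2: f' is the primitive of f''.\<close>
definition H2_curve ::
  "real \<Rightarrow> real \<Rightarrow> (real \<Rightarrow> real^2) \<Rightarrow> (real \<Rightarrow> real^2) \<Rightarrow> (real \<Rightarrow> real^2) \<Rightarrow> bool" where
  "H2_curve a b f f' f'' \<longleftrightarrow>
     (\<forall>x\<in>{a..b}. (f has_vector_derivative f' x) (at x within {a..b})) \<and>
     (\<forall>x\<in>{a..b}. (f'' has_integral (f' x - f' a)) {a..x}) \<and>
     (\<lambda>x. norm (f'' x) ^ 2) integrable_on {a..b}"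

definition W1inf_curve ::
  "real \<Rightarrow> real \<Rightarrow> (real \<Rightarrow> real^2) \<Rightarrow> (real \<Rightarrow> real^2) \<Rightarrow> bool" where
  "W1inf_curve a b f f' \<longleftrightarrow>
     bounded (f' ` {a..b}) \<and>
     (\<forall>x\<in>{a..b}. (f' has_integral (f x - f a)) {a..x})"

definition curve_length :: "real \<Rightarrow> (real \<Rightarrow> real^2) \<Rightarrow> real" where
  "curve_length L f = integral {0..L} (\<lambda>x. norm (vector_derivative f (at x within {0..L})))"

text \<open>Arclength reparametrisation of a constant-speed curve on [0,L]:
  gamma(s) = Y(s L / l(Y)), s in [0, l(Y)].\<close>
definition arclength_reparam :: "real \<Rightarrow> (real \<Rightarrow> real^2) \<Rightarrow> real \<Rightarrow> real^2" where
  "arclength_reparam L f = (\<lambda>s. f (s * L / curve_length L f))"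

definition L2sq :: "real \<Rightarrow> (real \<Rightarrow> real^2) \<Rightarrow> real" where
  "L2sq L f = integral {0..L} (\<lambda>x. norm (f x) ^ 2)"

end

theory Submission
  imports Defs
begin

lemma bil: "bilinear (inner :: 'a::euclidean_space \<Rightarrow> _)"
  by (auto simp: bilinear_def linear_iff inner_add_left inner_add_right)

lemma weak_conv:
  fixes \<phi> :: "real \<Rightarrow> real^2" and g :: "nat \<Rightarrow> real \<Rightarrow> real^2" and M :: real
  assumes phi: "\<phi> absolutely_integrable_on {a..b}"
   and cont: "\<And>n. continuous_on {a..b} (g n)"
   and bnd: "\<And>n x. x \<in> {a..b} \<Longrightarrow> norm (g n x) \<le> M"
   and M0: "0 \<le> M"
   and lim: "(\<lambda>n. integral {a..b} (\<lambda>x. norm (g n x))) \<longlonglongrightarrow> 0"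
  shows "(\<lambda>n. integral {a..b} (\<lambda>x. \<phi> x \<bullet> g n x)) \<longlonglongrightarrow> 0"
proof -
  define T where "T k = integral {a..b} (\<lambda>x. max (norm (\<phi> x)) (real k) - real k)" for k::nat
  have nphi: "(\<lambda>x. norm (\<phi> x)) absolutely_integrable_on {a..b}"
    using absolutely_integrable_norm[OF phi] by (simp add: o_def)
  have Tint: "(\<lambda>x. max (norm (\<phi> x)) (real k) - real k) integrable_on {a..b}" for k::nat
  proof -
    have "(\<lambda>x. max (norm (\<phi> x)) (real k)) absolutely_integrable_on {a..b}"
      by (rule absolutely_integrable_max_1[OF nphi]) simp
    then show ?thesis
      by (intro integrable_diff) (auto dest: absolutely_integrable_on_def[THEN iffD1])
  qed
  have T0: "T \<longlonglongrightarrow> 0"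
  proof -
    have "(\<lambda>k. integral {a..b} (\<lambda>x. max (norm (\<phi> x)) (real k) - real k)) \<longlonglongrightarrow> integral {a..b} (\<lambda>x. 0::real)"
    proof (rule dominated_convergence(2)[where h="\<lambda>x. norm (\<phi> x)"])
      show "(\<lambda>x. norm (\<phi> x)) integrable_on {a..b}" using nphi set_lebesgue_integral_eq_integral(1) by blast
      show "norm (max (norm (\<phi> x)) (real k) - real k) \<le> norm (\<phi> x)" for k x
        by (auto simp: max_def)
      show "(\<lambda>k. max (norm (\<phi> x)) (real k) - real k) \<longlonglongrightarrow> 0" for x
      proof (rule tendsto_eventually)
        obtain N::nat where "norm (\<phi> x) \<le> real N" using real_arch_simple by blast
        then show "\<forall>\<^sub>F k in sequentially. max (norm (\<phi> x)) (real k) - real k = 0"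
          unfolding eventually_sequentially by (intro exI[of _ N]) auto
      qed
    qed (rule Tint)
    then show ?thesis unfolding T_def by simp
  qed
  have Tnn: "T k \<ge> 0" for k
    unfolding T_def by (rule integral_nonneg[OF Tint]) auto
  have gint: "(\<lambda>x. norm (g n x)) integrable_on {a..b}" for n
    by (intro integrable_continuous_interval continuous_on_norm cont)
  have prodabs: "(\<lambda>x. g n x \<bullet> \<phi> x) absolutely_integrable_on {a..b}" for n
  proof (rule absolutely_integrable_bounded_measurable_product[OF bil _ _ _ phi])
    show "g n \<in> borel_measurable (lebesgue_on {a..b})"
      by (intro continuous_imp_measurable_on_sets_lebesgue cont) auto
    show "bounded (g n ` {a..b})"
      by (intro compact_imp_bounded compact_continuous_image cont compact_Icc)
  qed auto
  have prodint: "(\<lambda>x. \<phi> x \<bullet> g n x) integrable_on {a..b}" for n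
    using prodabs[of n] set_lebesgue_integral_eq_integral(1) by (simp add: inner_commute)
  have key: "norm (integral {a..b} (\<lambda>x. \<phi> x \<bullet> g n x))
     \<le> real k * integral {a..b} (\<lambda>x. norm (g n x)) + M * T k" for n k
  proof -
    have "norm (integral {a..b} (\<lambda>x. \<phi> x \<bullet> g n x))
        \<le> integral {a..b} (\<lambda>x. real k * norm (g n x) + M * (max (norm (\<phi> x)) (real k) - real k))"
    proof (rule integral_norm_bound_integral[OF prodint])
      show "(\<lambda>x. real k * norm (g n x) + M * (max (norm (\<phi> x)) (real k) - real k)) integrable_on {a..b}"
        by (intro integrable_add integrable_on_mult_right gint Tint)
      fix x assume x: "x \<in> {a..b}"
      have c: "norm (\<phi> x \<bullet> g n x) \<le> norm (\<phi> x) * norm (g n x)"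
        by (simp add: Cauchy_Schwarz_ineq2)
      have gb: "norm (g n x) \<le> M" using bnd x by auto
      have "norm (\<phi> x) * norm (g n x) \<le> real k * norm (g n x) + M * (max (norm (\<phi> x)) (real k) - real k)"
      proof (cases "norm (\<phi> x) \<le> real k")
        case True then show ?thesis by (simp add: mult_right_mono max_def)
      next
        case False
        then have "(norm (\<phi> x) - real k) * norm (g n x) \<le> (norm (\<phi> x) - real k) * M"
          using gb by (intro mult_left_mono) auto
        with False show ?thesis by (simp add: max_def algebra_simps)
      qed
      with c show "norm (\<phi> x \<bullet> g n x) \<le> real k * norm (g n x) + M * (max (norm (\<phi> x)) (real k) - real k)"
        by linarith
    qed
    also have "\<dots> = real k * integral {a..b} (\<lambda>x. norm (g n x)) + M * T k"
      unfolding T_def by (simp add: integral_add integrable_on_mult_right gint Tint)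
    finally show ?thesis .
  qed
  show ?thesis
  proof (rule LIMSEQ_I)
    fix r :: real assume r: "0 < r"
    obtain k where k: "norm (T k - 0) < r / (2 * (M + 1))"
      using LIMSEQ_D[OF T0, of "r / (2 * (M + 1))"] r M0 by auto
    have MT: "M * T k < r / 2"
    proof -
      have "M * T k \<le> (M + 1) * T k" using Tnn[of k] by (simp add: mult_right_mono)
      also have "\<dots> < (M + 1) * (r / (2 * (M + 1)))"
        using k Tnn[of k] M0 by (intro mult_strict_left_mono) auto
      also have "\<dots> = r / 2" using M0 by (simp add: field_simps)
      finally show ?thesis .
    qed
    obtain N where N: "\<And>n. n \<ge> N \<Longrightarrow> norm (integral {a..b} (\<lambda>x. norm (g n x)) - 0) < r / (2 * (real k + 1))"
      using LIMSEQ_D[OF lim, of "r / (2 * (real k + 1))"] r by auto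
    show "\<exists>N. \<forall>n\<ge>N. norm (integral {a..b} (\<lambda>x. \<phi> x \<bullet> g n x) - 0) < r"
    proof (intro exI allI impI)
      fix n assume n: "n \<ge> N"
      have I: "\<bar>integral {a..b} (\<lambda>x. norm (g n x))\<bar> < r / (2 * (real k + 1))" using N[OF n] by simp
      have "real k * integral {a..b} (\<lambda>x. norm (g n x)) \<le> (real k + 1) * \<bar>integral {a..b} (\<lambda>x. norm (g n x))\<bar>"
      proof -
        have "real k * integral {a..b} (\<lambda>x. norm (g n x)) \<le> real k * \<bar>integral {a..b} (\<lambda>x. norm (g n x))\<bar>"
          by (intro mult_left_mono) auto
        also have "\<dots> \<le> (real k + 1) * \<bar>integral {a..b} (\<lambda>x. norm (g n x))\<bar>"
          by (intro mult_right_mono) auto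
        finally show ?thesis .
      qed
      also have "\<dots> \<le> (real k + 1) * (r / (2 * (real k + 1)))"
        using I by (intro mult_left_mono) auto
      also have "\<dots> = r / 2" by (simp add: field_simps)
      finally have "real k * integral {a..b} (\<lambda>x. norm (g n x)) \<le> r / 2" .
      with key[of n k] MT show "norm (integral {a..b} (\<lambda>x. \<phi> x \<bullet> g n x) - 0) < r" by simp
    qed
  qed
qed
lemma eps_facts:
  fixes u u' u'' :: "real \<Rightarrow> real^2" and p q c :: "real^2"
  assumes L0: "0 < L" and Ld: "L = dist p q"
    and c_def: "c = (1/L) *\<^sub>R (q - p)"
    and der: "\<forall>x\<in>{0..L}. (u has_vector_derivative u' x) (at x within {0..L})"
    and sec: "\<forall>x\<in>{0..L}. (u'' has_integral (u' x - u' 0)) {0..x}"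
    and sp: "\<And>x. x \<in> {0..L} \<Longrightarrow> norm (u' x) = l / L"
    and u0: "u 0 = p" and uL: "u L = q"
    and ll: "l - L \<le> C * s" and s0: "0 < s" and s1: "s \<le> 1" and C0: "0 < C"
  shows "continuous_on {0..L} (\<lambda>x. u' x - c)"
    and "integral {0..L} (\<lambda>x. norm (u' x - c) ^ 2) \<le> (C * (2 * L + C) / L) * s"
    and "\<And>x. x \<in> {0..L} \<Longrightarrow> norm (u' x - c) \<le> (L + C) / L + 1"
    and "integral {0..L} (\<lambda>x. norm (u' x - c)) \<le> (L + C * (2 * L + C) / L) * sqrt s"
    and "continuous_on {0..L} (\<lambda>x. u x - (p + (x / L) *\<^sub>R (q - p)))"
    and "\<And>x. x \<in> {0..L} \<Longrightarrow> norm (u x - (p + (x / L) *\<^sub>R (q - p))) \<le> (L + C * (2 * L + C) / L) * sqrt s"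
proof -
  define C' where "C' = C * (2 * L + C) / L"
  have C'0: "C' > 0" unfolding C'_def using L0 C0 by auto
  have nqp: "norm (q - p) = L" using Ld by (simp add: dist_norm norm_minus_commute)
  have nc: "norm c = 1" unfolding c_def using L0 nqp by simp
  have l0: "l \<ge> 0"
  proof -
    have "0 \<le> l / L" using sp[of 0] L0 by (metis atLeastAtMost_iff less_eq_real_def norm_ge_zero order_refl)
    then show ?thesis using L0 by (simp add: zero_le_divide_iff)
  qed
  have intu'': "u'' integrable_on {0..L}" using sec L0 by auto
  have u'eq: "u' x = u' 0 + integral {0..x} u''" if "x \<in> {0..L}" for x
    using integral_unique[OF sec[rule_format, OF that]] by simp
  have contu': "continuous_on {0..L} u'"
  proof -
    have "continuous_on {0..L} (\<lambda>x. u' 0 + integral {0..x} u'')"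
      by (intro continuous_on_add continuous_on_const indefinite_integral_continuous_1 intu'')
    then show ?thesis using continuous_on_cong u'eq by (smt (verit))
  qed
  show contg: "continuous_on {0..L} (\<lambda>x. u' x - c)"
    by (intro continuous_on_diff contu' continuous_on_const)
  have gint: "(\<lambda>x. u' x - c) integrable_on {0..L}"
    by (rule integrable_continuous_interval[OF contg])
  have ngint: "(\<lambda>x. norm (u' x - c)) integrable_on {0..L}"
    by (intro integrable_continuous_interval continuous_on_norm contg)
  have ng2int: "(\<lambda>x. norm (u' x - c) ^ 2) integrable_on {0..L}"
    by (intro integrable_continuous_interval continuous_on_power continuous_on_norm contg)
  have ftc: "(u' has_integral (q - p)) {0..L}"
    using fundamental_theorem_of_calculus[of 0 L u u'] der L0 u0 uL by auto
  have "((\<lambda>x. u' x \<bullet> c) has_integral ((q - p) \<bullet> c)) {0..L}"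
    using has_integral_linear[OF ftc bounded_linear_inner_left[of c]] by (simp add: o_def)
  moreover have "(q - p) \<bullet> c = L"
    unfolding c_def using L0 nqp by (simp add: power2_norm_eq_inner[symmetric] power2_eq_square)
  ultimately have ip: "((\<lambda>x. u' x \<bullet> c) has_integral L) {0..L}" by simp
  have A: "((\<lambda>x. norm (u' x - c) ^ 2) has_integral (((l/L)^2 + 1) * L - 2 * L)) {0..L}"
  proof (rule has_integral_eq[rotated])
    show "((\<lambda>x. ((l/L)^2 + 1) - 2 * (u' x \<bullet> c)) has_integral (((l/L)^2 + 1) * L - 2 * L)) {0..L}"
      using has_integral_diff[OF has_integral_const_real[of "(l/L)^2 + 1" 0 L] has_integral_mult_right[OF ip, of 2]] L0
      by (simp add: mult.commute)
    fix x assume x: "x \<in> {0..L}"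
    have "norm (u' x - c) ^ 2 = norm (u' x) ^ 2 - 2 * (u' x \<bullet> c) + norm c ^ 2"
      by (simp add: power2_norm_eq_inner inner_diff_left inner_diff_right inner_commute)
    then show "((l/L)^2 + 1) - 2 * (u' x \<bullet> c) = norm (u' x - c) ^ 2"
      using sp[OF x] nc by simp
  qed
  have Aval: "integral {0..L} (\<lambda>x. norm (u' x - c) ^ 2) = (l - L) * (l + L) / L"
  proof -
    have "((l/L)^2 + 1) * L - 2 * L = (l - L) * (l + L) / L"
      using L0 by (simp add: field_simps power2_eq_square)
    then show ?thesis using integral_unique[OF A] by simp
  qed
  have prodb: "(l - L) * (l + L) \<le> C * (2 * L + C) * s"
  proof (cases "l \<le> L")
    case True
    then have "(l - L) * (l + L) \<le> 0" using l0 L0 by (simp add: mult_nonpos_nonneg)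
    also have "0 \<le> C * (2 * L + C) * s" using C0 L0 s0 by simp
    finally show ?thesis .
  next
    case False
    have "l + L \<le> 2 * L + C" using ll s1 C0 by (smt (verit) mult_left_le)
    then have "(l - L) * (l + L) \<le> (C * s) * (2 * L + C)"
      using False ll l0 L0 by (intro mult_mono) auto
    then show ?thesis by (simp add: algebra_simps)
  qed
  show A2: "integral {0..L} (\<lambda>x. norm (u' x - c) ^ 2) \<le> (C * (2 * L + C) / L) * s"
  proof -
    have "(l - L) * (l + L) / L \<le> C * (2 * L + C) * s / L" using prodb L0 by (intro divide_right_mono) auto
    then show ?thesis unfolding Aval by simp
  qed
  show gb: "norm (u' x - c) \<le> (L + C) / L + 1" if x: "x \<in> {0..L}" for x
  proof -
    have "norm (u' x - c) \<le> norm (u' x) + norm c" by (rule norm_triangle_ineq4)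
    also have "\<dots> = l / L + 1" using sp[OF x] nc by simp
    also have "l \<le> L + C" using ll s1 C0 by (smt (verit) mult_left_le)
    then have "l / L + 1 \<le> (L + C) / L + 1" using L0 by (simp add: divide_right_mono)
    finally show ?thesis .
  qed
  define r where "r = sqrt s"
  have r0: "r > 0" unfolding r_def using s0 by simp
  have rr: "r * r = s" unfolding r_def using s0 by simp
  have I1: "integral {0..L} (\<lambda>x. norm (u' x - c)) \<le> (L + C') * r"
  proof -
    have "integral {0..L} (\<lambda>x. norm (u' x - c)) \<le> integral {0..L} (\<lambda>x. r + norm (u' x - c) ^ 2 / r)"
    proof (rule integral_le[OF ngint])
      show "(\<lambda>x. r + norm (u' x - c) ^ 2 / r) integrable_on {0..L}"
        by (intro integrable_add integrable_on_const integrable_on_divide ng2int) auto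
      fix x
      have "norm (u' x - c) * r \<le> r * r + norm (u' x - c) ^ 2"
      proof -
        define a where "a = norm (u' x - c)"
        have h1: "0 \<le> (a - r) * (a - r)" by simp
        have h2: "0 \<le> a * r" using r0 unfolding a_def by simp
        have h3: "(a - r) * (a - r) = a * a - 2 * (a * r) + r * r" by (simp add: algebra_simps)
        have "a * r \<le> r * r + a * a" using h1 h2 h3 by linarith
        then show ?thesis unfolding a_def by (simp add: power2_eq_square)
      qed
      then show "norm (u' x - c) \<le> r + norm (u' x - c) ^ 2 / r"
        using r0 by (simp add: field_simps)
    qed
    also have "\<dots> = L * r + integral {0..L} (\<lambda>x. norm (u' x - c) ^ 2) / r"
      using has_integral_add[OF has_integral_const_real[of r 0 L] has_integral_divide[OF integrable_integral[OF ng2int], of r]] L0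
      by (simp add: integral_unique mult.commute)
    also have "\<dots> \<le> L * r + C' * s / r"
    proof -
      have "integral {0..L} (\<lambda>x. norm (u' x - c) ^ 2) / r \<le> (C' * s) / r"
        using A2 r0 unfolding C'_def by (intro divide_right_mono) auto
      then show ?thesis by simp
    qed
    also have "\<dots> = (L + C') * r" using rr r0 by (simp add: field_simps)
    finally show ?thesis .
  qed
  then show "integral {0..L} (\<lambda>x. norm (u' x - c)) \<le> (L + C * (2 * L + C) / L) * sqrt s"
    unfolding C'_def r_def .
  have Veq: "u x - (p + (x / L) *\<^sub>R (q - p)) = integral {0..x} (\<lambda>t. u' t - c)" if x: "x \<in> {0..L}" for x
  proof -
    have "(u' has_integral (u x - u 0)) {0..x}"
    proof (rule fundamental_theorem_of_calculus)
      show "0 \<le> x" using x by auto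
      fix t assume t: "t \<in> {0..x}"
      then have tL: "t \<in> {0..L}" using x by auto
      have sub: "{0..x} \<subseteq> {0..L}" using x by auto
      show "(u has_vector_derivative u' t) (at t within {0..x})"
        by (rule has_vector_derivative_within_subset[OF der[rule_format, OF tL] sub])
    qed
    from has_integral_diff[OF this has_integral_const_real[of c 0 x]]
    have "((\<lambda>t. u' t - c) has_integral (u x - p - x *\<^sub>R c)) {0..x}" using x u0 by simp
    moreover have "u x - p - x *\<^sub>R c = u x - (p + (x / L) *\<^sub>R (q - p))"
      unfolding c_def by (simp add: algebra_simps)
    ultimately show ?thesis by (simp add: integral_unique)
  qed
  have "continuous_on {0..L} (\<lambda>x. integral {0..x} (\<lambda>t. u' t - c))"
    by (rule indefinite_integral_continuous_1[OF gint])
  then show "continuous_on {0..L} (\<lambda>x. u x - (p + (x / L) *\<^sub>R (q - p)))"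
    using continuous_on_cong Veq by (smt (verit))
  show "norm (u x - (p + (x / L) *\<^sub>R (q - p))) \<le> (L + C * (2 * L + C) / L) * sqrt s" if x: "x \<in> {0..L}" for x
  proof -
    have sub: "{0..x} \<subseteq> {0..L}" using x by auto
    have "norm (integral {0..x} (\<lambda>t. u' t - c)) \<le> integral {0..x} (\<lambda>t. norm (u' t - c))"
      by (intro integral_norm_bound_integral integrable_on_subinterval[OF gint sub]
          integrable_on_subinterval[OF ngint sub]) auto
    also have "\<dots> \<le> integral {0..L} (\<lambda>t. norm (u' t - c))"
      by (intro integral_subset_le sub integrable_on_subinterval[OF ngint sub] ngint) auto
    also have "\<dots> \<le> (L + C') * r" by (rule I1)
    finally show ?thesis using Veq[OF x] unfolding C'_def r_def by simp
  qed
qed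
theorem lemma4p3:
  fixes p q :: "real^2"
    and U U' U'' :: "real \<Rightarrow> real \<Rightarrow> real^2"
    and C L :: real
  assumes "p $ 2 = 0" and "q $ 2 = 0" and "p \<noteq> q"
    and "L = dist p q"
    and "C > 0"
    and H2: "\<And>\<epsilon>. \<epsilon> \<in> {0<..1} \<Longrightarrow> H2_curve 0 L (U \<epsilon>) (U' \<epsilon>) (U'' \<epsilon>)"
    and speed: "\<And>\<epsilon> x. \<epsilon> \<in> {0<..1} \<Longrightarrow> x \<in> {0..L} \<Longrightarrow>
                 norm (U' \<epsilon> x) = curve_length L (U \<epsilon>) / L"
    and start: "\<And>\<epsilon>. \<epsilon> \<in> {0<..1} \<Longrightarrow> U \<epsilon> 0 = p"
    and finish: "\<And>\<epsilon>. \<epsilon> \<in> {0<..1} \<Longrightarrow> U \<epsilon> L = q"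
    and horiz0: "\<And>\<epsilon>. \<epsilon> \<in> {0<..1} \<Longrightarrow> U' \<epsilon> 0 $ 2 = 0"
    and horizL: "\<And>\<epsilon>. \<epsilon> \<in> {0<..1} \<Longrightarrow> U' \<epsilon> L $ 2 = 0"
    and len: "\<And>\<epsilon>. \<epsilon> \<in> {0<..1} \<Longrightarrow> curve_length L (U \<epsilon>) - dist p q \<le> C * sqrt \<epsilon>"
    and curv: "\<And>\<epsilon>. \<epsilon> \<in> {0<..1} \<Longrightarrow>
       \<exists>g' g''. H2_curve 0 (curve_length L (U \<epsilon>)) (arclength_reparam L (U \<epsilon>)) g' g'' \<and>
         sqrt \<epsilon> * integral {0..curve_length L (U \<epsilon>)} (\<lambda>s. norm (g'' s) ^ 2) \<le> C"
  shows "\<exists>e :: nat \<Rightarrow> real. \<exists>V V' :: real \<Rightarrow> real^2.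
           (\<forall>n. e n \<in> {0<..1}) \<and> e \<longlonglongrightarrow> 0 \<and>
           W1inf_curve 0 L V V' \<and>
           (\<lambda>n. L2sq L (\<lambda>x. U (e n) x - V x) + L2sq L (\<lambda>x. U' (e n) x - V' x)) \<longlonglongrightarrow> 0 \<and>
           (\<forall>\<phi> :: real \<Rightarrow> real^2. \<phi> absolutely_integrable_on {0..L} \<longrightarrow>
              (\<lambda>n. integral {0..L} (\<lambda>x. \<phi> x \<bullet> (U (e n) x - V x))) \<longlonglongrightarrow> 0 \<and>
              (\<lambda>n. integral {0..L} (\<lambda>x. \<phi> x \<bullet> (U' (e n) x - V' x))) \<longlonglongrightarrow> 0) \<and>
           (\<exists>C'>0. \<forall>n. L2sq L (\<lambda>x. U' (e n) x - V' x) \<le> C' * sqrt (e n))"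
  proof -
  have L0: "L > 0" using assms(3,4) by simp
  define c where "c = (1/L) *\<^sub>R (q - p)"
  define V where "V = (\<lambda>x::real. p + (x / L) *\<^sub>R (q - p))"
  define C' where "C' = C * (2 * L + C) / L"
  define e where "e = (\<lambda>n::nat. 1 / real (Suc n))"
  define M where "M = (L + C) / L + 1"
  have C'0: "C' > 0" unfolding C'_def using L0 \<open>C > 0\<close> by auto
  have M0: "M \<ge> 0" unfolding M_def using L0 \<open>C > 0\<close> by auto
  have e01: "e n \<in> {0<..1}" for n unfolding e_def by auto
  have EF: "continuous_on {0..L} (\<lambda>x. U' \<epsilon> x - c) \<and> L2sq L (\<lambda>x. U' \<epsilon> x - c) \<le> C' * sqrt \<epsilon>
     \<and> (\<forall>x\<in>{0..L}. norm (U' \<epsilon> x - c) \<le> M)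
     \<and> integral {0..L} (\<lambda>x. norm (U' \<epsilon> x - c)) \<le> (L + C') * sqrt (sqrt \<epsilon>)
     \<and> continuous_on {0..L} (\<lambda>x. U \<epsilon> x - V x)
     \<and> (\<forall>x\<in>{0..L}. norm (U \<epsilon> x - V x) \<le> (L + C') * sqrt (sqrt \<epsilon>))" if eps: "\<epsilon> \<in> {0<..1}" for \<epsilon>
  proof -
    have h: "H2_curve 0 L (U \<epsilon>) (U' \<epsilon>) (U'' \<epsilon>)" using H2 eps .
    have der: "\<forall>x\<in>{0..L}. (U \<epsilon> has_vector_derivative U' \<epsilon> x) (at x within {0..L})"
      using h unfolding H2_curve_def by blast
    have sec: "\<forall>x\<in>{0..L}. (U'' \<epsilon> has_integral (U' \<epsilon> x - U' \<epsilon> 0)) {0..x}"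
      using h unfolding H2_curve_def by blast
    have ll: "curve_length L (U \<epsilon>) - L \<le> C * sqrt \<epsilon>" using len[OF eps] assms(4) by simp
    have s0: "0 < sqrt \<epsilon>" using eps by auto
    have s1: "sqrt \<epsilon> \<le> 1" using eps by auto
    note E = eps_facts[OF L0 assms(4) c_def der sec speed[OF eps] start[OF eps] finish[OF eps] ll s0 s1 \<open>0 < C\<close>]
    show ?thesis using E unfolding L2sq_def C'_def V_def M_def by auto
  qed
  define r where "r n = (L + C') * sqrt (sqrt (e n))" for n
  have e0: "e \<longlonglongrightarrow> 0"
    unfolding e_def using LIMSEQ_inverse_real_of_nat by (simp add: inverse_eq_divide)
  have se0: "(\<lambda>n. sqrt (e n)) \<longlonglongrightarrow> 0"
    using tendsto_real_sqrt[OF e0] by simp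
  have r0: "r \<longlonglongrightarrow> 0"
    unfolding r_def using tendsto_mult_left[OF tendsto_real_sqrt[OF se0], of "L + C'"] by simp
  have rle: "r n \<le> L + C'" for n
  proof -
    have "sqrt (sqrt (e n)) \<le> 1" using e01[of n] by auto
    then show ?thesis unfolding r_def using C'0 L0 by (simp add: mult_left_le)
  qed
  have rnn: "r n \<ge> 0" for n unfolding r_def using C'0 L0 e01[of n] by auto
  note EFn = EF[OF e01]
  have contU: "continuous_on {0..L} (\<lambda>x. U (e n) x - V x)" for n using EFn[of n] by blast
  have contU': "continuous_on {0..L} (\<lambda>x. U' (e n) x - c)" for n using EFn[of n] by blast
  have W: "W1inf_curve 0 L V (\<lambda>x. c)"
    unfolding W1inf_curve_def
  proof
    have "(\<lambda>x. c) ` {0..L} = {c}" using L0 by (auto intro!: image_eqI[of c _ 0])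
    then show "bounded ((\<lambda>x. c) ` {0..L})" by simp
    show "\<forall>x\<in>{0..L}. ((\<lambda>x. c) has_integral V x - V 0) {0..x}"
    proof
      fix x assume x: "x \<in> {0..L}"
      have "V x - V 0 = x *\<^sub>R c" unfolding V_def c_def by simp
      then show "((\<lambda>x. c) has_integral V x - V 0) {0..x}"
        using has_integral_const_real[of c 0 x] x by simp
    qed
  qed
  have A1: "(\<lambda>n. L2sq L (\<lambda>x. U (e n) x - V x)) \<longlonglongrightarrow> 0"
  proof (rule Lim_null_comparison[where g="\<lambda>n. L * (r n)^2"])
    show "(\<lambda>n. L * (r n)^2) \<longlonglongrightarrow> 0" using tendsto_mult_left[OF tendsto_power[OF r0, of 2], of L] by simp
    show "\<forall>\<^sub>F n in sequentially. norm (L2sq L (\<lambda>x. U (e n) x - V x)) \<le> L * (r n)^2"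
    proof (rule always_eventually, rule allI)
      fix n
      have int: "(\<lambda>x. norm (U (e n) x - V x) ^ 2) integrable_on {0..L}"
        by (intro integrable_continuous_interval continuous_on_power continuous_on_norm contU)
      have "L2sq L (\<lambda>x. U (e n) x - V x) \<le> integral {0..L} (\<lambda>x. (r n)^2)"
        unfolding L2sq_def
      proof (rule integral_le[OF int])
        show "(\<lambda>x. (r n)^2) integrable_on {0..L}" by (intro integrable_on_const) auto
        fix x assume x: "x \<in> {0..L}"
        have "norm (U (e n) x - V x) \<le> r n" using EFn[of n] x unfolding r_def by blast
        then show "norm (U (e n) x - V x) ^ 2 \<le> (r n)^2" by (intro power_mono) auto
      qed
      also have "\<dots> = L * (r n)^2" using L0 by simp
      finally have "L2sq L (\<lambda>x. U (e n) x - V x) \<le> L * (r n)^2" .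
      moreover have "L2sq L (\<lambda>x. U (e n) x - V x) \<ge> 0"
        unfolding L2sq_def by (rule integral_nonneg[OF int]) auto
      ultimately show "norm (L2sq L (\<lambda>x. U (e n) x - V x)) \<le> L * (r n)^2" by simp
    qed
  qed
  have A2: "(\<lambda>n. L2sq L (\<lambda>x. U' (e n) x - c)) \<longlonglongrightarrow> 0"
  proof (rule Lim_null_comparison[where g="\<lambda>n. C' * sqrt (e n)"])
    show "(\<lambda>n. C' * sqrt (e n)) \<longlonglongrightarrow> 0" using tendsto_mult_left[OF se0, of C'] by simp
    show "\<forall>\<^sub>F n in sequentially. norm (L2sq L (\<lambda>x. U' (e n) x - c)) \<le> C' * sqrt (e n)"
    proof (rule always_eventually, rule allI)
      fix n
      have int: "(\<lambda>x. norm (U' (e n) x - c) ^ 2) integrable_on {0..L}"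
        by (intro integrable_continuous_interval continuous_on_power continuous_on_norm contU')
      have "L2sq L (\<lambda>x. U' (e n) x - c) \<ge> 0"
        unfolding L2sq_def by (rule integral_nonneg[OF int]) auto
      then show "norm (L2sq L (\<lambda>x. U' (e n) x - c)) \<le> C' * sqrt (e n)" using EFn[of n] by simp
    qed
  qed
  have weak1: "(\<lambda>n. integral {0..L} (\<lambda>x. \<phi> x \<bullet> (U (e n) x - V x))) \<longlonglongrightarrow> 0"
    if phi: "\<phi> absolutely_integrable_on {0..L}" for \<phi> :: "real \<Rightarrow> real^2"
  proof (rule weak_conv[OF phi, where g="\<lambda>n x. U (e n) x - V x" and M="L + C'"])
    show "continuous_on {0..L} (\<lambda>x. U (e n) x - V x)" for n by (rule contU)
    show "norm (U (e n) x - V x) \<le> L + C'" if "x \<in> {0..L}" for n x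
      using EFn[of n] that rle[of n] unfolding r_def by force
    show "0 \<le> L + C'" using L0 C'0 by simp
    show "(\<lambda>n. integral {0..L} (\<lambda>x. norm (U (e n) x - V x))) \<longlonglongrightarrow> 0"
    proof (rule Lim_null_comparison[where g="\<lambda>n. L * r n"])
      show "(\<lambda>n. L * r n) \<longlonglongrightarrow> 0" using tendsto_mult_left[OF r0, of L] by simp
      show "\<forall>\<^sub>F n in sequentially. norm (integral {0..L} (\<lambda>x. norm (U (e n) x - V x))) \<le> L * r n"
      proof (rule always_eventually, rule allI)
        fix n
        have int: "(\<lambda>x. norm (U (e n) x - V x)) integrable_on {0..L}"
          by (intro integrable_continuous_interval continuous_on_norm contU)
        have "integral {0..L} (\<lambda>x. norm (U (e n) x - V x)) \<le> integral {0..L} (\<lambda>x. r n)"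
        proof (rule integral_le[OF int])
          show "(\<lambda>x. r n) integrable_on {0..L}" by (intro integrable_on_const) auto
          show "norm (U (e n) x - V x) \<le> r n" if "x \<in> {0..L}" for x
            using EFn[of n] that unfolding r_def by blast
        qed
        also have "\<dots> = L * r n" using L0 by simp
        finally have "integral {0..L} (\<lambda>x. norm (U (e n) x - V x)) \<le> L * r n" .
        moreover have "integral {0..L} (\<lambda>x. norm (U (e n) x - V x)) \<ge> 0"
          by (rule integral_nonneg[OF int]) auto
        ultimately show "norm (integral {0..L} (\<lambda>x. norm (U (e n) x - V x))) \<le> L * r n" by simp
      qed
    qed
  qed
  have weak2: "(\<lambda>n. integral {0..L} (\<lambda>x. \<phi> x \<bullet> (U' (e n) x - c))) \<longlonglongrightarrow> 0"
    if phi: "\<phi> absolutely_integrable_on {0..L}" for \<phi> :: "real \<Rightarrow> real^2"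
  proof (rule weak_conv[OF phi, where g="\<lambda>n x. U' (e n) x - c" and M="M"])
    show "continuous_on {0..L} (\<lambda>x. U' (e n) x - c)" for n by (rule contU')
    show "norm (U' (e n) x - c) \<le> M" if "x \<in> {0..L}" for n x
      using EFn[of n] that by blast
    show "0 \<le> M" by (rule M0)
    show "(\<lambda>n. integral {0..L} (\<lambda>x. norm (U' (e n) x - c))) \<longlonglongrightarrow> 0"
    proof (rule Lim_null_comparison[where g="r"])
      show "r \<longlonglongrightarrow> 0" by (rule r0)
      show "\<forall>\<^sub>F n in sequentially. norm (integral {0..L} (\<lambda>x. norm (U' (e n) x - c))) \<le> r n"
      proof (rule always_eventually, rule allI)
        fix n
        have int: "(\<lambda>x. norm (U' (e n) x - c)) integrable_on {0..L}"
          by (intro integrable_continuous_interval continuous_on_norm contU')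
        have "integral {0..L} (\<lambda>x. norm (U' (e n) x - c)) \<ge> 0"
          by (rule integral_nonneg[OF int]) auto
        then show "norm (integral {0..L} (\<lambda>x. norm (U' (e n) x - c))) \<le> r n"
          using EFn[of n] unfolding r_def by simp
      qed
    qed
  qed
  have weak: "\<forall>\<phi> :: real \<Rightarrow> real^2. \<phi> absolutely_integrable_on {0..L} \<longrightarrow>
              (\<lambda>n. integral {0..L} (\<lambda>x. \<phi> x \<bullet> (U (e n) x - V x))) \<longlonglongrightarrow> 0 \<and>
              (\<lambda>n. integral {0..L} (\<lambda>x. \<phi> x \<bullet> (U' (e n) x - c))) \<longlonglongrightarrow> 0"
    using weak1 weak2 by blast
  have Cb: "\<exists>C'>0. \<forall>n. L2sq L (\<lambda>x. U' (e n) x - c) \<le> C' * sqrt (e n)"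
    using C'0 EFn by blast
  have S: "(\<lambda>n. L2sq L (\<lambda>x. U (e n) x - V x) + L2sq L (\<lambda>x. U' (e n) x - c)) \<longlonglongrightarrow> 0"
    using tendsto_add_zero[OF A1 A2] .
  have e01': "\<forall>n. e n \<in> {0<..1}" using e01 by blast
  show ?thesis
    by (rule exI[of _ e], rule exI[of _ V], rule exI[of _ "\<lambda>x. c"], intro conjI) (fact e01' e0 W S weak Cb)+
qed

end
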